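(* Let $\varphi$ be a concave Orlicz function satisfying $\lim_{t\to0^+}\sup_{u\in(0,1]}\varphi(tu)/\varphi(u)=0$. Then $\lambda_\varphi$ is lattice $1$-concave; indeed $\sum_{j=1}^J\lambda_\varphi(f_j)\le\lambda_\varphi(\sum_{j=1}^Jf_j)$ for every finite family $(f_j)_{j=1}^J$ in $[0,\infty]^{\mathbb{N}}$.
   Context: An Orlicz function is a non-null, left-continuous, non-decreasing $\varphi\colon[0,\infty)\to[0,\infty)$ with $\lim_{t\to0^+}\varphi(t)=0$; set $\varphi(\infty)=\infty$. For $f=(a_n)\in[0,\infty]^{\mathbb{N}}$, $\lambda_\varphi(f)=\inf\{t>0:\sum_{n=1}^\infty\varphi(a_n/t)\le1\}$; under the stated limit condition this is a function quasi-norm over $\mathbb{N}$ (counting measure). A function quasi-norm $\lambda$ over $\mathbb{N}$ is lattice $1$-concave if there is $C$ with $\sum_{j=1}^J\lambda(f_j)\le C\lambda(\sum_{j=1}^Jf_j)$ for all finite families of nonnegative sequences. *)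

theory Defs
  imports "HOL-Analysis.Analysis"
begin

definition orlicz_function :: "(real \<Rightarrow> real) \<Rightarrow> bool" where
  "orlicz_function \<phi> \<longleftrightarrow>
     (\<exists>t\<ge>0. \<phi> t \<noteq> 0) \<and>
     (\<forall>t\<ge>0. \<phi> t \<ge> 0) \<and>
     mono_on {0..} \<phi> \<and>
     (\<forall>t>0. continuous (at_left t) \<phi>) \<and>
     (\<phi> \<longlongrightarrow> 0) (at_right 0)"

definition phi_ext :: "(real \<Rightarrow> real) \<Rightarrow> ennreal \<Rightarrow> ennreal" where
  "phi_ext \<phi> x = (if x = \<infinity> then \<infinity> else ennreal (\<phi> (enn2real x)))"

text \<open>Luxemburg-type functional on sequences in [0,\<infinity>]^\<nat>
  (inf of the empty set is \<infinity>).\<close>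
definition lambda_phi :: "(real \<Rightarrow> real) \<Rightarrow> (nat \<Rightarrow> ennreal) \<Rightarrow> ennreal" where
  "lambda_phi \<phi> f =
     Inf (ennreal ` {t::real. t > 0 \<and> (\<Sum>n. phi_ext \<phi> (f n / ennreal t)) \<le> 1})"

definition lattice_1_concave :: "((nat \<Rightarrow> ennreal) \<Rightarrow> ennreal) \<Rightarrow> bool" where
  "lattice_1_concave L \<longleftrightarrow>
     (\<exists>C::real. \<forall>(J::nat) (f :: nat \<Rightarrow> nat \<Rightarrow> ennreal).
        (\<Sum>j<J. L (f j)) \<le> ennreal C * L (\<lambda>n. \<Sum>j<J. f j n))"

end

theory Submission
  imports Defs
begin

lemma lam_below:
  assumes "t > 0" "ennreal t < lambda_phi \<phi> f"
  shows "(\<Sum>n. phi_ext \<phi> (f n / ennreal t)) > 1"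
proof (rule ccontr)
  assume "\<not> ?thesis"
  hence "ennreal t \<in> ennreal ` {t::real. t > 0 \<and> (\<Sum>n. phi_ext \<phi> (f n / ennreal t)) \<le> 1}"
    using assms(1) by (auto simp: not_less)
  hence "lambda_phi \<phi> f \<le> ennreal t" unfolding lambda_phi_def by (rule Inf_lower)
  with assms(2) show False by simp
qed

lemma lam_lower:
  assumes "\<And>t. t > 0 \<Longrightarrow> ennreal t < c \<Longrightarrow> (\<Sum>n. phi_ext \<phi> (f n / ennreal t)) > 1"
  shows "c \<le> lambda_phi \<phi> f"
  unfolding lambda_phi_def
proof (rule Inf_greatest)
  fix x assume "x \<in> ennreal ` {t::real. t > 0 \<and> (\<Sum>n. phi_ext \<phi> (f n / ennreal t)) \<le> 1}"
  then obtain t where t: "t > 0" "(\<Sum>n. phi_ext \<phi> (f n / ennreal t)) \<le> 1" "x = ennreal t" by auto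
  show "c \<le> x"
  proof (rule ccontr)
    assume "\<not> c \<le> x"
    hence "ennreal t < c" using t by simp
    with assms t show False by fastforce
  qed
qed

lemma split_lemma:
  fixes a b :: ennreal and t :: real
  assumes "a > 0" "b > 0" "t > 0" "ennreal t < a + b"
  shows "\<exists>t1 t2. t1 > 0 \<and> t2 > 0 \<and> t1 + t2 = t \<and> ennreal t1 < a \<and> ennreal t2 < b"
proof -
  define A where "A = enn2real (min a (ennreal t))"
  define B where "B = enn2real (min b (ennreal t))"
  have Aa: "ennreal A = min a (ennreal t)" unfolding A_def by (cases a) (auto simp: min_def top_unique)
  have Bb: "ennreal B = min b (ennreal t)" unfolding B_def by (cases b) (auto simp: min_def top_unique)
  have A0: "A > 0" using Aa assms
    by (metis A_def ennreal_0 enn2real_nonneg ennreal_less_zero_iff less_eq_real_def min_less_iff_conj not_gr_zero)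
  have B0: "B > 0" using Bb assms
    by (metis B_def ennreal_0 enn2real_nonneg ennreal_less_zero_iff less_eq_real_def min_less_iff_conj not_gr_zero)
  have tAB: "t < A + B"
  proof -
    have "ennreal t < ennreal A + ennreal B"
    proof (cases "a \<ge> ennreal t")
      case True
      then show ?thesis using Aa Bb B0 assms by (simp add: min_def)
    next
      case F1: False
      show ?thesis
      proof (cases "b \<ge> ennreal t")
        case True
        then show ?thesis using Aa Bb A0 assms by (simp add: min_def add.commute)
      next
        case False
        have "a \<le> ennreal t" using F1 by (simp add: not_le less_imp_le)
        hence "ennreal A = a" using Aa by (simp add: min_def)
        moreover have "b \<le> ennreal t" using False by (simp add: not_le less_imp_le)
        hence "ennreal B = b" using Bb by (simp add: min_def)
        ultimately show ?thesis using assms(4) by (simp only:)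
      qed
    qed
    thus ?thesis using A0 B0 assms(3) by (simp add: ennreal_plus[symmetric] ennreal_less_iff del: ennreal_plus)
  qed
  define t1 where "t1 = t * A / (A + B)"
  define t2 where "t2 = t * B / (A + B)"
  have "t1 > 0" "t2 > 0" using A0 B0 assms(3) by (auto simp: t1_def t2_def)
  moreover have "t1 + t2 = t"
  proof -
    have "t1 + t2 = t * (A + B) / (A + B)" by (simp add: t1_def t2_def add_divide_distrib distrib_left)
    thus ?thesis using A0 B0 by simp
  qed
  moreover have "t1 < A"
  proof -
    have "t * A < (A + B) * A" by (rule mult_strict_right_mono[OF tAB A0])
    thus ?thesis using A0 B0 by (simp add: t1_def pos_divide_less_eq)
  qed
  moreover have "t2 < B"
  proof -
    have "t * B < (A + B) * B" by (rule mult_strict_right_mono[OF tAB B0])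
    thus ?thesis using A0 B0 by (simp add: t2_def pos_divide_less_eq)
  qed
  moreover have "ennreal A \<le> a" "ennreal B \<le> b" using Aa Bb by auto
  moreover have "ennreal t1 < ennreal A" using \<open>t1 < A\<close> A0 by (intro ennreal_lessI)
  moreover have "ennreal t2 < ennreal B" using \<open>t2 < B\<close> B0 by (intro ennreal_lessI)
  ultimately show ?thesis
    by (intro exI[of _ t1] exI[of _ t2]) (meson order_less_le_trans)
qed

lemma phi_ext_mono:
  assumes "mono_on {0..} \<phi>" "x \<le> y"
  shows "phi_ext \<phi> x \<le> phi_ext \<phi> y"
proof (cases "y = \<infinity>")
  case True then show ?thesis by (simp add: phi_ext_def)
next
  case False
  hence "x \<noteq> \<infinity>" using assms(2) by (auto simp: top_unique)
  moreover have "enn2real x \<le> enn2real y" using False assms(2) by (simp add: enn2real_mono less_top)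
  ultimately show ?thesis using False assms(1)
    by (auto simp: phi_ext_def intro!: ennreal_leI mono_onD[OF assms(1)])
qed

lemma conc_pt:
  assumes nn: "\<And>t. t \<ge> 0 \<Longrightarrow> \<phi> t \<ge> 0" and cc: "concave_on {0..} \<phi>"
    and t1: "t1 > 0" and t2: "t2 > 0"
  shows "ennreal (t1/(t1+t2)) * phi_ext \<phi> (x / ennreal t1) + ennreal (t2/(t1+t2)) * phi_ext \<phi> (y / ennreal t2)
     \<le> phi_ext \<phi> ((x+y) / ennreal (t1+t2))"
proof -
  have tt: "ennreal (t1+t2) \<noteq> top" by simp
  show ?thesis
  proof (cases "x = top \<or> y = top")
    case True
    hence "(x+y) / ennreal (t1+t2) = top" using tt by (auto simp: ennreal_top_divide)
    then show ?thesis by (simp add: phi_ext_def)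
  next
    case False
    then obtain X Y where X: "x = ennreal X" "X \<ge> 0" and Y: "y = ennreal Y" "Y \<ge> 0"
      by (metis enn2real_nonneg ennreal_enn2real_if)
    have e1: "x / ennreal t1 = ennreal (X/t1)" using X t1 by (simp add: divide_ennreal)
    have e2: "y / ennreal t2 = ennreal (Y/t2)" using Y t2 by (simp add: divide_ennreal)
    have e3: "(x+y) / ennreal (t1+t2) = ennreal ((X+Y)/(t1+t2))" using X Y t1 t2
      by (simp add: divide_ennreal ennreal_plus[symmetric] del: ennreal_plus)
    define s where "s = t2/(t1+t2)"
    have s01: "s \<ge> 0" "s \<le> 1" using t1 t2 by (auto simp: s_def)
    have s1: "1 - s = t1/(t1+t2)" using t1 t2 by (simp add: s_def field_simps)
    have pt: "(X+Y)/(t1+t2) = (1 - s) *\<^sub>R (X/t1) + s *\<^sub>R (Y/t2)"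
    proof -
      have a: "(1 - s) * (X/t1) = X/(t1+t2)" using t1 t2 by (simp add: s1)
      have b: "s * (Y/t2) = Y/(t1+t2)" using t1 t2 by (simp add: s_def)
      show ?thesis by (simp only: a b add_divide_distrib real_scaleR_def)
    qed
    have "(1 - s) * \<phi> (X/t1) + s * \<phi> (Y/t2) \<le> \<phi> ((X+Y)/(t1+t2))"
      unfolding pt using X Y t1 t2 s01 by (intro concave_onD[OF cc]) auto
    hence "ennreal ((1 - s) * \<phi> (X/t1) + s * \<phi> (Y/t2)) \<le> ennreal (\<phi> ((X+Y)/(t1+t2)))"
      by (rule ennreal_leI)
    moreover have "ennreal ((1 - s) * \<phi> (X/t1) + s * \<phi> (Y/t2))
        = ennreal (1 - s) * ennreal (\<phi> (X/t1)) + ennreal s * ennreal (\<phi> (Y/t2))"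
      using s01 nn X Y t1 t2 by (simp add: ennreal_plus[symmetric] ennreal_mult[symmetric] del: ennreal_plus)
    ultimately show ?thesis
    proof -
      have p1: "phi_ext \<phi> (x / ennreal t1) = ennreal (\<phi> (X/t1))"
        unfolding e1 phi_ext_def using X(2) t1 by simp
      have p2: "phi_ext \<phi> (y / ennreal t2) = ennreal (\<phi> (Y/t2))"
        unfolding e2 phi_ext_def using Y(2) t2 by simp
      have p3: "phi_ext \<phi> ((x+y) / ennreal (t1+t2)) = ennreal (\<phi> ((X+Y)/(t1+t2)))"
        unfolding e3 phi_ext_def using X(2) Y(2) t1 t2 by simp
      assume h1: "ennreal ((1 - s) * \<phi> (X/t1) + s * \<phi> (Y/t2)) \<le> ennreal (\<phi> ((X+Y)/(t1+t2)))"
        and h2: "ennreal ((1 - s) * \<phi> (X/t1) + s * \<phi> (Y/t2))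
        = ennreal (1 - s) * ennreal (\<phi> (X/t1)) + ennreal s * ennreal (\<phi> (Y/t2))"
      show ?thesis unfolding p1 p2 p3 s1[symmetric] s_def[symmetric] using h1 h2 by simp
    qed
  qed
qed

lemma binary:
  assumes nn: "\<And>t. t \<ge> 0 \<Longrightarrow> \<phi> t \<ge> 0" and mo: "mono_on {0..} \<phi>" and cc: "concave_on {0..} \<phi>"
  shows "lambda_phi \<phi> f + lambda_phi \<phi> g \<le> lambda_phi \<phi> (\<lambda>n. f n + g n)"
proof (rule lam_lower)
  fix t :: real assume t: "t > 0" "ennreal t < lambda_phi \<phi> f + lambda_phi \<phi> g"
  show "(\<Sum>n. phi_ext \<phi> ((f n + g n) / ennreal t)) > 1"
  proof (cases "lambda_phi \<phi> f = 0 \<or> lambda_phi \<phi> g = 0")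
    case True
    then obtain h where h: "h = f \<or> h = g" "ennreal t < lambda_phi \<phi> h"
      using t True by (auto intro: that[of f] that[of g])
    have "1 < (\<Sum>n. phi_ext \<phi> (h n / ennreal t))" using lam_below[OF t(1) h(2)] .
    also have "\<dots> \<le> (\<Sum>n. phi_ext \<phi> ((f n + g n) / ennreal t))"
    proof (rule suminf_le)
      fix n
      have "h n \<le> f n + g n" using h(1) by (auto simp: add_increasing add_increasing2)
      thus "phi_ext \<phi> (h n / ennreal t) \<le> phi_ext \<phi> ((f n + g n) / ennreal t)"
        by (intro phi_ext_mono[OF mo] divide_right_mono_ennreal)
    qed (auto intro: summableI)
    finally show ?thesis .
  next
    case False
    hence ab: "lambda_phi \<phi> f > 0" "lambda_phi \<phi> g > 0" by (auto simp: zero_less_iff_neq_zero)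
    obtain t1 t2 where tt: "t1 > 0" "t2 > 0" "t1 + t2 = t" "ennreal t1 < lambda_phi \<phi> f" "ennreal t2 < lambda_phi \<phi> g"
      using split_lemma[OF ab t(1) t(2)] by blast
    define S1 where "S1 = (\<Sum>n. phi_ext \<phi> (f n / ennreal t1))"
    define S2 where "S2 = (\<Sum>n. phi_ext \<phi> (g n / ennreal t2))"
    define a1 where "a1 = ennreal (t1/(t1+t2))"
    define a2 where "a2 = ennreal (t2/(t1+t2))"
    have S1: "S1 > 1" unfolding S1_def by (rule lam_below[OF tt(1) tt(4)])
    have S2: "S2 > 1" unfolding S2_def by (rule lam_below[OF tt(2) tt(5)])
    have a12: "a1 + a2 = 1" using tt unfolding a1_def a2_def
      by (simp add: ennreal_plus[symmetric] add_divide_distrib[symmetric] del: ennreal_plus)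
    have a1p: "a1 > 0" "a1 < top" using tt by (auto simp: a1_def)
    have a2t: "a2 \<noteq> top" by (simp add: a2_def)
    have "1 = a2 + a1" using a12 by (simp add: add.commute)
    also have "a2 + a1 < a2 + a1 * S1"
      using ennreal_mult_strict_left_mono[OF S1 a1p] a2t by (simp add: ennreal_add_left_cancel_less)
    also have "\<dots> \<le> a2 * S2 + a1 * S1"
      using S2 by (intro add_right_mono) (metis less_imp_le mult.right_neutral mult_left_mono zero_le)
    also have "\<dots> = (\<Sum>n. a1 * phi_ext \<phi> (f n / ennreal t1) + a2 * phi_ext \<phi> (g n / ennreal t2))"
      unfolding S1_def S2_def
      by (subst suminf_add[symmetric]) (auto intro: summableI simp: add.commute)
    also have "\<dots> \<le> (\<Sum>n. phi_ext \<phi> ((f n + g n) / ennreal t))"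
      unfolding a1_def a2_def tt(3)[symmetric]
      by (rule suminf_le) (auto intro: summableI conc_pt[OF nn cc tt(1) tt(2)])
    finally show ?thesis .
  qed
qed

theorem proposition4p16:
  fixes \<phi> :: "real \<Rightarrow> real"
  assumes "orlicz_function \<phi>"
    and "concave_on {0..} \<phi>"
    and "((\<lambda>t. SUP u\<in>{0<..1}. \<phi> (t * u) / \<phi> u) \<longlongrightarrow> 0) (at_right 0)"
  shows "lattice_1_concave (lambda_phi \<phi>) \<and>
         (\<forall>(J::nat) (f :: nat \<Rightarrow> nat \<Rightarrow> ennreal).
            (\<Sum>j<J. lambda_phi \<phi> (f j)) \<le> lambda_phi \<phi> (\<lambda>n. \<Sum>j<J. f j n))"
proof -
  have nn: "\<And>t. t \<ge> 0 \<Longrightarrow> \<phi> t \<ge> 0" and mo: "mono_on {0..} \<phi>"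
    using assms(1) unfolding orlicz_function_def by auto
  have main: "(\<Sum>j<J. lambda_phi \<phi> (f j)) \<le> lambda_phi \<phi> (\<lambda>n. \<Sum>j<J. f j n)" for J :: nat and f :: "nat \<Rightarrow> nat \<Rightarrow> ennreal"
  proof (induction J)
    case 0
    then show ?case by simp
  next
    case (Suc J)
    have "(\<Sum>j<Suc J. lambda_phi \<phi> (f j)) = (\<Sum>j<J. lambda_phi \<phi> (f j)) + lambda_phi \<phi> (f J)" by simp
    also have "\<dots> \<le> lambda_phi \<phi> (\<lambda>n. \<Sum>j<J. f j n) + lambda_phi \<phi> (f J)"
      using Suc.IH by (rule add_right_mono)
    also have "\<dots> \<le> lambda_phi \<phi> (\<lambda>n. (\<Sum>j<J. f j n) + f J n)"
      by (rule binary[OF nn mo assms(2)])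
    also have "\<dots> = lambda_phi \<phi> (\<lambda>n. \<Sum>j<Suc J. f j n)" by simp
    finally show ?case .
  qed
  have "lattice_1_concave (lambda_phi \<phi>)"
    unfolding lattice_1_concave_def by (rule exI[of _ 1]) (simp add: main)
  with main show ?thesis by blast
qed

end
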